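(* Fix integers $n\ge 2$ and $u\in\{1,\dots,n-1\}$ with $u\ge n/2$, and positive weights $d_1,\dots,d_{n-1}$. Let $(\beta^*_{u,j})_{j\ge1}$ be a real sequence such that $\bar\beta_p^2=\frac1p\sum_{j=1}^p(\beta^*_{u,j})^2$ converges to a finite limit $\bar\beta^2$ as $p\to\infty$, and let $\sigma^2>0$. For each $p\ge1$, let $\beta^*\in\mathbb{R}^{(n-1)\times p}$ be the matrix whose only nonzero row is the $u$-th row $(\beta^*_{u,1},\dots,\beta^*_{u,p})$, let $W\in\mathbb{R}^{n\times p}$ have i.i.d. $N(0,\sigma^2)$ entries, set $\bar Y=\bar X\beta^*+W$, $\hat c=\bar X^\top\bar Y$, and let $\hat u_p\in\arg\max_{i\in\{1,\dots,n-1\}}\|\hat c_{i,\bullet}\|$ be the first change-point selected by the group fused Lasso. For $i\in\{1,\dots,n-1\}$ define $$G_i=d_i^2\frac{i(n-i)}{n}\sigma^2+\frac{\bar\beta^2d_i^2d_u^2}{n^2}\times\begin{cases}i^2(n-u)^2 & \text{if } i\le u,\\ u^2(n-i)^2 & \text{if } i>u.\end{cases}$$ Then $\mathbb{P}\big(\hat u_p\in\arg\max_{i\in\{1,\dots,n-1\}}G_i\big)\to1$ as $p\to\infty$.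
   Context: For positive weights $d_1,\dots,d_{n-1}$, $X$ is the $n\times(n-1)$ matrix with $X_{k,j}=d_j$ if $k>j$ and $0$ otherwise, and $\bar X$ is obtained from $X$ by centering each column to mean zero; explicitly $\bar X_{k,i}=(i/n-1)d_i$ for $k\le i$ and $\bar X_{k,i}=(i/n)d_i$ for $k>i$. The group fused Lasso on centered data $\bar Y\in\mathbb{R}^{n\times p}$ with parameter $\lambda>0$ is $\min_{\beta\in\mathbb{R}^{(n-1)\times p}}\frac12\|\bar Y-\bar X\beta\|^2+\lambda\sum_{i=1}^{n-1}\|\beta_{i,\bullet}\|$ (Frobenius/Euclidean norms; $M_{i,\bullet}$ is the $i$-th row of $M$). Its solution is $\beta=0$ exactly when $\lambda\ge\max_i\|(\bar X^\top\bar Y)_{i,\bullet}\|$, and the "first change-point selected" is an index $i$ attaining $\max_i\|(\bar X^\top\bar Y)_{i,\bullet}\|$ (ties broken arbitrarily). *)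

theory Defs
  imports "HOL-Probability.Probability"
begin

text \<open>Design matrix X (n x (n-1)), rows k = 1..n, columns j = 1..n-1:
  X k j = d j if k > j, 0 otherwise.\<close>
definition Xmat :: "(nat \<Rightarrow> real) \<Rightarrow> nat \<Rightarrow> nat \<Rightarrow> real" where
  "Xmat d k j = (if k > j then d j else 0)"

definition Xbar :: "nat \<Rightarrow> (nat \<Rightarrow> real) \<Rightarrow> nat \<Rightarrow> nat \<Rightarrow> real" where
  "Xbar n d k j = Xmat d k j - (\<Sum>k'=1..n. Xmat d k' j) / real n"

definition beta_star :: "nat \<Rightarrow> (nat \<Rightarrow> real) \<Rightarrow> nat \<Rightarrow> nat \<Rightarrow> real" where
  "beta_star u b i j = (if i = u then b j else 0)"

definition Ybar :: "nat \<Rightarrow> (nat \<Rightarrow> real) \<Rightarrow> nat \<Rightarrow> (nat \<Rightarrow> real) \<Rightarrow> (nat \<times> nat \<Rightarrow> real)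
    \<Rightarrow> nat \<Rightarrow> nat \<Rightarrow> real" where
  "Ybar n d u b W k j = (\<Sum>i=1..n-1. Xbar n d k i * beta_star u b i j) + W (k, j)"

definition chat :: "nat \<Rightarrow> (nat \<Rightarrow> real) \<Rightarrow> nat \<Rightarrow> (nat \<Rightarrow> real) \<Rightarrow> (nat \<times> nat \<Rightarrow> real)
    \<Rightarrow> nat \<Rightarrow> nat \<Rightarrow> real" where
  "chat n d u b W i j = (\<Sum>k=1..n. Xbar n d k i * Ybar n d u b W k j)"

definition chat_row_norm :: "nat \<Rightarrow> (nat \<Rightarrow> real) \<Rightarrow> nat \<Rightarrow> (nat \<Rightarrow> real) \<Rightarrow> nat
    \<Rightarrow> (nat \<times> nat \<Rightarrow> real) \<Rightarrow> nat \<Rightarrow> real" where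
  "chat_row_norm n d u b p W i = sqrt (\<Sum>j=1..p. (chat n d u b W i j)\<^sup>2)"

definition argmax_set :: "nat set \<Rightarrow> (nat \<Rightarrow> real) \<Rightarrow> nat set" where
  "argmax_set A f = {i \<in> A. \<forall>i'\<in>A. f i' \<le> f i}"

text \<open>Noise distribution: W has i.i.d. N(0, sd^2) entries, indexed by {1..n} x {1..p}
  (sd is the standard deviation).\<close>
definition noise_space :: "real \<Rightarrow> nat \<Rightarrow> nat \<Rightarrow> (nat \<times> nat \<Rightarrow> real) measure" where
  "noise_space sd n p =
     PiM ({1..n} \<times> {1..p}) (\<lambda>_. density lborel (normal_density 0 sd))"

text \<open>The quantity G_i, with sd^2 the noise variance and bb2 = limit of bar beta_p^2.\<close>
definition Gfun :: "nat \<Rightarrow> (nat \<Rightarrow> real) \<Rightarrow> nat \<Rightarrow> real \<Rightarrow> real \<Rightarrow> nat \<Rightarrow> real" where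
  "Gfun n d u sd bb2 i =
     (d i)\<^sup>2 * (real i * real (n - i) / real n) * sd\<^sup>2
     + bb2 * (d i)\<^sup>2 * (d u)\<^sup>2 / (real n)\<^sup>2 *
       (if i \<le> u then (real i)\<^sup>2 * (real (n - u))\<^sup>2 else (real u)\<^sup>2 * (real (n - i))\<^sup>2)"

end

theory Submission
  imports Defs
begin


definition NN :: "real \<Rightarrow> real measure" where
  "NN sd = density lborel (normal_density 0 sd)"

lemma sets_NN[simp]: "sets (NN sd) = sets borel"
  by (simp add: NN_def)

lemma space_NN[simp]: "space (NN sd) = UNIV"
  by (simp add: NN_def)

lemma meas_NN[simp]: "measurable (NN sd) M = measurable borel M"
  by (rule measurable_cong_sets) simp_all

lemma prob_NN: "sd > 0 \<Longrightarrow> prob_space (NN sd)"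
  unfolding NN_def by (rule prob_space_normal_density)

lemma integral_NN: "(f::real\<Rightarrow>real) \<in> borel_measurable borel \<Longrightarrow>
   integral\<^sup>L (NN sd) f = (\<integral>x. normal_density 0 sd x * f x \<partial>lborel)"
  unfolding NN_def by (subst integral_density) auto

lemma integrable_NN_iff: "(f::real\<Rightarrow>real) \<in> borel_measurable borel \<Longrightarrow>
   integrable (NN sd) f = integrable lborel (\<lambda>x. normal_density 0 sd x * f x)"
  unfolding NN_def by (subst integrable_density) auto

lemma integrable_NN_pow: "sd > 0 \<Longrightarrow> integrable (NN sd) (\<lambda>x. x ^ k)"
  using integrable_normal_moment[of sd 0 k] by (subst integrable_NN_iff) auto

lemma NN_mom1: "sd > 0 \<Longrightarrow> (\<integral>x. x \<partial>NN sd) = 0"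
  using integral_normal_moment_odd[of sd 0 0] by (subst integral_NN) auto

lemma NN_mom2: "sd > 0 \<Longrightarrow> (\<integral>x. x^2 \<partial>NN sd) = sd^2"
  using integral_normal_moment_even[of sd 0 1] by (subst integral_NN) auto

lemma NN_mom4: "sd > 0 \<Longrightarrow> (\<integral>x. x^4 \<partial>NN sd) = 3 * sd^4"
proof -
  assume "sd > 0"
  have "(\<integral>x. x^4 \<partial>NN sd) = (\<integral>x. normal_density 0 sd x * (x - 0)^(2*2) \<partial>lborel)"
    by (subst integral_NN) auto
  also have "\<dots> = fact (2 * 2) / ((2 / sd\<^sup>2)^2 * fact 2)"
    using integral_normal_moment_even[OF \<open>sd>0\<close>, of 0 2] .
  also have "\<dots> = 3 * sd^4" using \<open>sd > 0\<close>
    by (simp add: fact_numeral field_simps power2_eq_square eval_nat_numeral)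
  finally show ?thesis .
qed

lemma coord_meas[measurable]: "(\<lambda>\<omega>. \<omega> x) \<in> borel_measurable (PiM I (\<lambda>_. NN sd))"
proof (cases "x \<in> I")
  case True
  then have "(\<lambda>\<omega>. \<omega> x) \<in> measurable (PiM I (\<lambda>_. NN sd)) (NN sd)"
    by (rule measurable_component_singleton)
  moreover have "measurable (PiM I (\<lambda>_. NN sd)) (NN sd) = measurable (PiM I (\<lambda>_. NN sd)) borel"
    by (rule measurable_cong_sets) (rule refl, rule sets_NN)
  ultimately show ?thesis by simp
next
  case False
  have "\<And>\<omega>. \<omega> \<in> space (PiM I (\<lambda>_. NN sd)) \<Longrightarrow> \<omega> x = undefined"
    using False unfolding space_PiM by (rule PiE_arb[rotated])
  then have "(\<lambda>\<omega>. \<omega> x) \<in> borel_measurable (PiM I (\<lambda>_. NN sd)) \<longleftrightarrow>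
        (\<lambda>\<omega>. undefined::real) \<in> borel_measurable (PiM I (\<lambda>_. NN sd))"
    by (intro measurable_cong) 
  then show ?thesis by simp
qed

lemma prob_PP: "sd > 0 \<Longrightarrow> prob_space (PiM I (\<lambda>_. NN sd))"
  by (intro prob_space_PiM prob_NN)

lemma PP_component:
  assumes "sd > 0" "x \<in> I"
  shows "distr (PiM I (\<lambda>_. NN sd)) (NN sd) (\<lambda>\<omega>. \<omega> x) = NN sd"
  using distr_PiM_component[of I "\<lambda>_. NN sd" x] assms prob_NN by auto

lemma integral_coord:
  assumes "sd > 0" "x \<in> I" and f[measurable]: "(f::real\<Rightarrow>real) \<in> borel_measurable borel"
  shows "(\<integral>\<omega>. f (\<omega> x) \<partial>PiM I (\<lambda>_. NN sd)) = integral\<^sup>L (NN sd) f"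
proof -
  have m: "(\<lambda>\<omega>. \<omega> x) \<in> measurable (PiM I (\<lambda>_. NN sd)) (NN sd)"
    using assms(2) by (rule measurable_component_singleton)
  have "integral\<^sup>L (NN sd) f = integral\<^sup>L (distr (PiM I (\<lambda>_. NN sd)) (NN sd) (\<lambda>\<omega>. \<omega> x)) f"
    using PP_component[OF assms(1,2)] by simp
  also have "\<dots> = (\<integral>\<omega>. f (\<omega> x) \<partial>PiM I (\<lambda>_. NN sd))"
    by (rule integral_distr[OF m]) simp
  finally show ?thesis by simp
qed

lemma integrable_coord:
  assumes "sd > 0" "x \<in> I" and f[measurable]: "(f::real\<Rightarrow>real) \<in> borel_measurable borel"
    and "integrable (NN sd) f"
  shows "integrable (PiM I (\<lambda>_. NN sd)) (\<lambda>\<omega>. f (\<omega> x))"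
proof -
  have m: "(\<lambda>\<omega>. \<omega> x) \<in> measurable (PiM I (\<lambda>_. NN sd)) (NN sd)"
    using assms(2) by (rule measurable_component_singleton)
  have "integrable (distr (PiM I (\<lambda>_. NN sd)) (NN sd) (\<lambda>\<omega>. \<omega> x)) f"
    using PP_component[OF assms(1,2)] assms(4) by simp
  then show ?thesis
    by (subst (asm) integrable_distr_eq[OF m]) simp_all
qed

lemma coord_indep:
  assumes "sd > 0" "finite I" "I \<noteq> {}"
  shows "prob_space.indep_vars (PiM I (\<lambda>_. NN sd)) (\<lambda>_. NN sd) (\<lambda>x \<omega>. \<omega> x) I"
proof -
  interpret product_prob_space "\<lambda>_. NN sd" I
    by (simp add: product_prob_space_def product_prob_space_axioms_def product_sigma_finite_def
        prob_NN[OF assms(1)] prob_space_imp_sigma_finite)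
  have d: "distr (PiM I (\<lambda>_. NN sd)) (PiM I (\<lambda>_. NN sd)) (\<lambda>x. restrict x I) = PiM I (\<lambda>_. NN sd)"
    using distr_PiM_restrict_finite[of I] assms by simp
  have "(\<Pi>\<^sub>M i\<in>I. distr (PiM I (\<lambda>_. NN sd)) (NN sd) (\<lambda>\<omega>. \<omega> i)) = PiM I (\<lambda>_. NN sd)"
    by (intro PiM_cong refl PP_component[OF assms(1)])
  then show ?thesis
    using d
    using assms(3)
    by (subst indep_vars_iff_distr_eq_PiM') (auto intro: measurable_component_singleton simp: restrict_def)
qed


definition Zc :: "nat \<Rightarrow> (nat \<Rightarrow> real) \<Rightarrow> nat \<Rightarrow> (nat \<times> nat \<Rightarrow> real) \<Rightarrow> real" where
  "Zc n c j \<omega> = (\<Sum>k=1..n. c k * \<omega> (k, j))"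

lemma Zc_meas[measurable]: "Zc n c j \<in> borel_measurable (PiM I (\<lambda>_. NN sd))"
  unfolding Zc_def by measurable

lemma col_indep_integral:
  fixes \<phi> \<psi> :: "real \<Rightarrow> real"
  assumes sd: "sd > 0" and n: "n \<ge> 1" and j: "j \<in> {1..p}" "j' \<in> {1..p}" "j \<noteq> j'"
    and [measurable]: "\<phi> \<in> borel_measurable borel" "\<psi> \<in> borel_measurable borel"
    and int: "integrable (PiM ({1..n}\<times>{1..p}) (\<lambda>_. NN sd)) (\<lambda>\<omega>. \<phi> (Zc n c j \<omega>))"
             "integrable (PiM ({1..n}\<times>{1..p}) (\<lambda>_. NN sd)) (\<lambda>\<omega>. \<psi> (Zc n c j' \<omega>))"
  shows "(\<integral>\<omega>. \<phi> (Zc n c j \<omega>) * \<psi> (Zc n c j' \<omega>) \<partial>PiM ({1..n}\<times>{1..p}) (\<lambda>_. NN sd))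
       = (\<integral>\<omega>. \<phi> (Zc n c j \<omega>) \<partial>PiM ({1..n}\<times>{1..p}) (\<lambda>_. NN sd))
       * (\<integral>\<omega>. \<psi> (Zc n c j' \<omega>) \<partial>PiM ({1..n}\<times>{1..p}) (\<lambda>_. NN sd))"
proof -
  let ?I = "{1..n}\<times>{1..p}"
  let ?P = "PiM ?I (\<lambda>_. NN sd)"
  interpret P: prob_space ?P by (rule prob_PP[OF sd])
  define K where "K l = {1..n}\<times>{l}" for l :: nat
  have ne: "?I \<noteq> {}" using n j by auto
  have ind0: "P.indep_vars (\<lambda>_. NN sd) (\<lambda>x \<omega>. \<omega> x) ?I"
    by (rule coord_indep[OF sd _ ne]) simp
  have ind1: "P.indep_vars (\<lambda>l. PiM (K l) (\<lambda>_. NN sd)) (\<lambda>l \<omega>. restrict (\<lambda>x. \<omega> x) (K l)) {1..p}"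
    by (rule P.indep_vars_restrict[OF ind0]) (auto simp: K_def disjoint_family_on_def)
  have ind2: "P.indep_vars (\<lambda>l. PiM (K l) (\<lambda>_. NN sd)) (\<lambda>l \<omega>. restrict (\<lambda>x. \<omega> x) (K l)) {j, j'}"
    by (rule P.indep_vars_subset[OF ind1]) (use j in auto)
  define Y where "Y l \<omega>' = (if l = j then \<phi> else \<psi>) (Zc n c l \<omega>')" for l \<omega>'
  have Ym: "Y l \<in> borel_measurable (PiM (K l) (\<lambda>_. NN sd))" for l
    unfolding Y_def by (cases "l = j") simp_all
  have ind3: "P.indep_vars (\<lambda>_. borel) (\<lambda>l \<omega>. Y l (restrict (\<lambda>x. \<omega> x) (K l))) {j, j'}"
    by (rule P.indep_vars_compose2[OF ind2]) (rule Ym)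
  have res: "Zc n c l (restrict (\<lambda>x. \<omega> x) (K l)) = Zc n c l \<omega>" for l \<omega>
    unfolding Zc_def K_def by (intro sum.cong) auto
  have Yr: "Y l (restrict (\<lambda>x. \<omega> x) (K l)) = (if l = j then \<phi> else \<psi>) (Zc n c l \<omega>)" for l \<omega>
    unfolding Y_def res ..
  have "(\<integral>\<omega>. (\<Prod>l\<in>{j,j'}. Y l (restrict (\<lambda>x. \<omega> x) (K l))) \<partial>?P)
        = (\<Prod>l\<in>{j,j'}. \<integral>\<omega>. Y l (restrict (\<lambda>x. \<omega> x) (K l)) \<partial>?P)"
    by (rule P.indep_vars_lebesgue_integral[OF _ ind3]) (use int j in \<open>auto simp: Yr\<close>)
  then show ?thesis using j by (simp add: Yr)
qed


lemma pow4_sum: "(\<Sum>k\<in>F. f k)^4 \<le> real (card F)^3 * (\<Sum>k\<in>F. (f k)^4)" for f :: "'a \<Rightarrow> real"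
proof -
  have a: "(\<Sum>k\<in>F. f k)\<^sup>2 \<le> (\<Sum>k\<in>F. (f k)\<^sup>2) * card F"
    by (rule sum_squared_le_sum_of_squares)
  have b: "(\<Sum>k\<in>F. (f k)\<^sup>2)\<^sup>2 \<le> (\<Sum>k\<in>F. ((f k)\<^sup>2)\<^sup>2) * card F"
    by (rule sum_squared_le_sum_of_squares)
  have "(\<Sum>k\<in>F. f k)^4 = ((\<Sum>k\<in>F. f k)\<^sup>2)\<^sup>2" by simp
  also have "\<dots> \<le> ((\<Sum>k\<in>F. (f k)\<^sup>2) * card F)\<^sup>2"
    by (rule power_mono[OF a]) simp
  also have "\<dots> = (\<Sum>k\<in>F. (f k)\<^sup>2)\<^sup>2 * (real (card F))\<^sup>2" by (simp add: power_mult_distrib)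
  also have "\<dots> \<le> (\<Sum>k\<in>F. ((f k)\<^sup>2)\<^sup>2) * card F * (real (card F))\<^sup>2"
    by (rule mult_right_mono[OF b]) simp
  also have "\<dots> = real (card F)^3 * (\<Sum>k\<in>F. (f k)^4)"
    by (simp add: power2_eq_square eval_nat_numeral algebra_simps)
  finally show ?thesis .
qed

context
  fixes sd :: real and n p :: nat
  assumes sd: "sd > 0"
begin

abbreviation "PP \<equiv> PiM ({1..n}\<times>{1..p}) (\<lambda>_. NN sd)"

lemma PP_prob: "prob_space PP" by (rule prob_PP[OF sd])

lemma int_coord_pow: "x \<in> {1..n}\<times>{1..p} \<Longrightarrow> integrable PP (\<lambda>\<omega>. (\<omega> x)^k)"
  using integrable_coord[OF sd, of x _ "\<lambda>t. t^k"] integrable_NN_pow[OF sd] by auto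

lemma int_coord: "x \<in> {1..n}\<times>{1..p} \<Longrightarrow> integrable PP (\<lambda>\<omega>. \<omega> x)"
  using int_coord_pow[of x 1] by simp

lemma pair_coord:
  assumes x: "x \<in> {1..n}\<times>{1..p}" and y: "y \<in> {1..n}\<times>{1..p}" and xy: "x \<noteq> y"
  shows "integrable PP (\<lambda>\<omega>. \<omega> x * \<omega> y)" "(\<integral>\<omega>. \<omega> x * \<omega> y \<partial>PP) = 0"
proof -
  let ?I = "{1..n}\<times>{1..p}"
  interpret P: prob_space PP by (rule PP_prob)
  have ne: "?I \<noteq> {}" using x by auto
  have ind0: "P.indep_vars (\<lambda>_. NN sd) (\<lambda>x \<omega>. \<omega> x) ?I"
    by (rule coord_indep[OF sd _ ne]) simp
  have ind1: "P.indep_vars (\<lambda>_. NN sd) (\<lambda>x \<omega>. \<omega> x) {x,y}"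
    by (rule P.indep_vars_subset[OF ind0]) (use x y in auto)
  have ind2: "P.indep_vars (\<lambda>_. borel) (\<lambda>l \<omega>. (\<lambda>t::real. t) (\<omega> l)) {x,y}"
    by (rule P.indep_vars_compose2[OF ind1]) simp
  have i: "l \<in> {x,y} \<Longrightarrow> integrable PP (\<lambda>\<omega>. \<omega> l)" for l
    using int_coord x y by auto
  have "integrable PP (\<lambda>\<omega>. \<Prod>l\<in>{x,y}. \<omega> l)"
    by (rule P.indep_vars_integrable[OF _ ind2]) (use i in auto)
  then show "integrable PP (\<lambda>\<omega>. \<omega> x * \<omega> y)" using xy by simp
  have "(\<integral>\<omega>. (\<Prod>l\<in>{x,y}. \<omega> l) \<partial>PP) = (\<Prod>l\<in>{x,y}. \<integral>\<omega>. \<omega> l \<partial>PP)"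
    by (rule P.indep_vars_lebesgue_integral[OF _ ind2]) (use i in auto)
  moreover have "(\<integral>\<omega>. \<omega> x \<partial>PP) = 0"
    using integral_coord[OF sd x, of "\<lambda>t. t"] NN_mom1[OF sd] by simp
  ultimately show "(\<integral>\<omega>. \<omega> x * \<omega> y \<partial>PP) = 0" using xy by simp
qed

lemma Zc_int: assumes "j \<in> {1..p}"
  shows "integrable PP (Zc n c j)" "(\<integral>\<omega>. Zc n c j \<omega> \<partial>PP) = 0"
proof -
  have i: "k \<in> {1..n} \<Longrightarrow> integrable PP (\<lambda>\<omega>. \<omega> (k,j))" for k
    using int_coord assms by auto
  have z: "k \<in> {1..n} \<Longrightarrow> (\<integral>\<omega>. \<omega> (k,j) \<partial>PP) = 0" for k
    using integral_coord[OF sd, of "(k,j)" _ "\<lambda>t. t"] NN_mom1[OF sd] assms by simp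
  show "integrable PP (Zc n c j)" unfolding Zc_def using i by auto
  show "(\<integral>\<omega>. Zc n c j \<omega> \<partial>PP) = 0" unfolding Zc_def using i z
    by (subst Bochner_Integration.integral_sum) auto
qed

lemma Zc_sq: assumes "j \<in> {1..p}"
  shows "integrable PP (\<lambda>\<omega>. (Zc n c j \<omega>)^2)"
    "(\<integral>\<omega>. (Zc n c j \<omega>)^2 \<partial>PP) = sd^2 * (\<Sum>k=1..n. (c k)^2)"
proof -
  have e: "(Zc n c j \<omega>)^2 = (\<Sum>k=1..n. \<Sum>k'=1..n. c k * c k' * (\<omega> (k,j) * \<omega> (k',j)))" for \<omega>
    unfolding Zc_def power2_eq_square sum_product by (simp add: algebra_simps)
  have i: "k \<in> {1..n} \<Longrightarrow> k' \<in> {1..n} \<Longrightarrow> integrable PP (\<lambda>\<omega>. \<omega> (k,j) * \<omega> (k',j))" for k k'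
  proof (cases "k = k'")
    case True
    assume "k \<in> {1..n}"
    then show ?thesis using True int_coord_pow[of "(k,j)" 2] assms by (simp add: power2_eq_square)
  next
    case False
    assume "k \<in> {1..n}" "k' \<in> {1..n}"
    then show ?thesis using pair_coord(1)[of "(k,j)" "(k',j)"] False assms by auto
  qed
  have v: "k \<in> {1..n} \<Longrightarrow> k' \<in> {1..n} \<Longrightarrow> (\<integral>\<omega>. \<omega> (k,j) * \<omega> (k',j) \<partial>PP) = (if k = k' then sd^2 else 0)" for k k'
  proof (cases "k = k'")
    case True
    assume "k \<in> {1..n}"
    then show ?thesis using True integral_coord[OF sd, of "(k,j)" _ "\<lambda>t. t^2"] NN_mom2[OF sd] assms
      by (simp add: power2_eq_square)
  next
    case False
    assume "k \<in> {1..n}" "k' \<in> {1..n}"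
    then show ?thesis using pair_coord(2)[of "(k,j)" "(k',j)"] False assms by auto
  qed
  show "integrable PP (\<lambda>\<omega>. (Zc n c j \<omega>)^2)" unfolding e
    by (intro Bochner_Integration.integrable_sum integrable_mult_right i) auto
  have "(\<integral>\<omega>. (Zc n c j \<omega>)^2 \<partial>PP) = (\<Sum>k\<in>{1..n}. \<integral>\<omega>. (\<Sum>k'\<in>{1..n}. c k * c k' * (\<omega> (k,j) * \<omega> (k',j))) \<partial>PP)"
    unfolding e by (rule Bochner_Integration.integral_sum) (intro Bochner_Integration.integrable_sum integrable_mult_right i; simp)
  also have "\<dots> = (\<Sum>k\<in>{1..n}. \<Sum>k'\<in>{1..n}. c k * c k' * (if k = k' then sd^2 else 0))"
  proof (rule sum.cong[OF refl])
    fix k assume k: "k \<in> {1..n}"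
    have "(\<integral>\<omega>. (\<Sum>k'\<in>{1..n}. c k * c k' * (\<omega> (k,j) * \<omega> (k',j))) \<partial>PP) = (\<Sum>k'\<in>{1..n}. \<integral>\<omega>. c k * c k' * (\<omega> (k,j) * \<omega> (k',j)) \<partial>PP)"
      by (rule Bochner_Integration.integral_sum) (intro integrable_mult_right i k; simp)
    also have "\<dots> = (\<Sum>k'\<in>{1..n}. c k * c k' * (if k = k' then sd^2 else 0))"
    proof (rule sum.cong[OF refl])
      fix k' assume k': "k' \<in> {1..n}"
      show "(\<integral>\<omega>. c k * c k' * (\<omega> (k,j) * \<omega> (k',j)) \<partial>PP) = c k * c k' * (if k = k' then sd^2 else 0)"
        by (simp only: integral_mult_right_zero v[OF k k'])
    qed
    finally show "(\<integral>\<omega>. (\<Sum>k'\<in>{1..n}. c k * c k' * (\<omega> (k,j) * \<omega> (k',j))) \<partial>PP) = (\<Sum>k'\<in>{1..n}. c k * c k' * (if k = k' then sd^2 else 0))" .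
  qed
  also have "\<dots> = sd^2 * (\<Sum>k=1..n. (c k)^2)"
    by (auto simp: sum_distrib_left power2_eq_square if_distrib sum.delta cong: if_cong intro!: sum.cong)
  finally show "(\<integral>\<omega>. (Zc n c j \<omega>)^2 \<partial>PP) = sd^2 * (\<Sum>k=1..n. (c k)^2)" .
qed

lemma Zc_4: assumes "j \<in> {1..p}"
  shows "integrable PP (\<lambda>\<omega>. (Zc n c j \<omega>)^4)"
    "(\<integral>\<omega>. (Zc n c j \<omega>)^4 \<partial>PP) \<le> real n^3 * (\<Sum>k=1..n. (c k)^4) * (3 * sd^4)"
proof -
  let ?B = "\<lambda>\<omega>. real n^3 * (\<Sum>k=1..n. (c k)^4 * (\<omega> (k,j))^4)"
  have le: "(Zc n c j \<omega>)^4 \<le> ?B \<omega>" for \<omega>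
    using pow4_sum[of "\<lambda>k. c k * \<omega> (k,j)" "{1..n}"] unfolding Zc_def
    by (simp add: power_mult_distrib)
  have iB: "integrable PP ?B" using int_coord_pow assms by auto
  show i4: "integrable PP (\<lambda>\<omega>. (Zc n c j \<omega>)^4)"
  proof (rule Bochner_Integration.integrable_bound[OF iB])
    show "AE \<omega> in PP. norm ((Zc n c j \<omega>)^4) \<le> norm (?B \<omega>)"
    proof (rule AE_I2)
      fix \<omega>
      have "0 \<le> (Zc n c j \<omega>)^4" by simp
      then show "norm ((Zc n c j \<omega>)^4) \<le> norm (?B \<omega>)" using le[of \<omega>] by simp
    qed
  qed simp
  have "(\<integral>\<omega>. (Zc n c j \<omega>)^4 \<partial>PP) \<le> (\<integral>\<omega>. ?B \<omega> \<partial>PP)"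
    by (rule integral_mono[OF i4 iB le])
  also have "\<dots> = real n^3 * (\<Sum>k=1..n. (c k)^4 * (3 * sd^4))"
  proof -
    have m4: "k \<in> {1..n} \<Longrightarrow> (\<integral>\<omega>. (\<omega> (k,j))^4 \<partial>PP) = 3 * sd^4" for k
      using integral_coord[OF sd, of "(k,j)" "{1..n}\<times>{1..p}" "\<lambda>t. t^4"] NN_mom4[OF sd] assms by simp
    have ii: "k \<in> {1..n} \<Longrightarrow> integrable PP (\<lambda>\<omega>. (c k)^4 * (\<omega> (k,j))^4)" for k
      using int_coord_pow[of "(k,j)" 4] assms by simp
    show ?thesis
      apply (subst integral_mult_right_zero)
      apply (subst Bochner_Integration.integral_sum[OF ii], assumption)
      apply (rule arg_cong[where f="\<lambda>x. real n^3 * x"])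
      apply (rule sum.cong[OF refl])
      apply (subst integral_mult_right_zero)
      apply (subst m4, assumption, rule refl)
      done
  qed
  also have "\<dots> = real n^3 * (\<Sum>k=1..n. (c k)^4) * (3 * sd^4)"
    by (simp add: sum_distrib_right)
  finally show "(\<integral>\<omega>. (Zc n c j \<omega>)^4 \<partial>PP) \<le> real n^3 * (\<Sum>k=1..n. (c k)^4) * (3 * sd^4)" .
qed

end


definition Yf :: "real \<Rightarrow> (nat \<Rightarrow> real) \<Rightarrow> real \<Rightarrow> nat \<Rightarrow> real \<Rightarrow> real" where
  "Yf a b s2 j z = 2 * a * b j * z + z^2 - s2"

lemma Yf_meas[measurable]: "Yf a b s2 j \<in> borel_measurable borel"
  unfolding Yf_def by measurable

lemma sq3: "(x+y-z)^2 \<le> 3*(x^2+y^2+z^2)" for x y z :: real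
proof -
  have "0 \<le> (x-y)^2 + (x+z)^2 + (y+z)^2" by simp
  then show ?thesis by (simp add: power2_eq_square algebra_simps)
qed

lemma sq2: "abs (u * v) \<le> u^2 + v^2" for u v :: real
proof -
  have "0 \<le> (\<bar>u\<bar>-\<bar>v\<bar>)^2" by simp
  then have "2 * \<bar>u\<bar> * \<bar>v\<bar> \<le> u^2 + v^2" by (simp add: power2_eq_square algebra_simps)
  moreover have "0 \<le> \<bar>u\<bar> * \<bar>v\<bar>" by simp
  moreover have "abs (u * v) = \<bar>u\<bar> * \<bar>v\<bar>" by (simp add: abs_mult)
  ultimately show ?thesis by linarith
qed

context
  fixes sd :: real and n p :: nat and c b :: "nat \<Rightarrow> real" and a :: real
  assumes sd: "sd > 0"
begin

abbreviation "PE \<equiv> PiM ({1..n}\<times>{1..p}) (\<lambda>_. NN sd)"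
abbreviation "s2 \<equiv> sd^2 * (\<Sum>k=1..n. (c k)^2)"
abbreviation "Y j \<omega> \<equiv> Yf a b s2 j (Zc n c j \<omega>)"

lemma PE_fin: "finite_measure PE"
  using PP_prob[OF sd, of n p] prob_space_def by blast

lemma PE_const: "integrable PE (\<lambda>_. C::real)"
  by (rule finite_measure.integrable_const[OF PE_fin])

lemma PE_iconst: "(\<integral>\<omega>. C \<partial>PE) = (C::real)"
  by (simp only: lebesgue_integral_const prob_space.prob_space[OF PP_prob[OF sd, of n p]]) simp

lemma Y_int: assumes j: "j \<in> {1..p}"
  shows "integrable PE (Y j)" "(\<integral>\<omega>. Y j \<omega> \<partial>PE) = 0"
proof -
  note z1 = Zc_int[OF sd j, where c=c and n=n] and z2 = Zc_sq[OF sd j, where c=c and n=n]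
  have e: "Y j \<omega> = 2 * a * b j * Zc n c j \<omega> + (Zc n c j \<omega>)^2 - s2" for \<omega>
    unfolding Yf_def ..
  show "integrable PE (Y j)" unfolding e using z1 z2
    by (intro Bochner_Integration.integrable_diff Bochner_Integration.integrable_add integrable_mult_right PE_const) auto
  have i1: "integrable PE (\<lambda>\<omega>. 2 * a * b j * Zc n c j \<omega>)"
    using z1(1) by (rule integrable_mult_right)
  have i12: "integrable PE (\<lambda>\<omega>. 2 * a * b j * Zc n c j \<omega> + (Zc n c j \<omega>)^2)"
    using i1 z2(1) by (rule Bochner_Integration.integrable_add)
  have c1: "(\<integral>\<omega>. s2 \<partial>PE) = s2" by (rule PE_iconst)
  show "(\<integral>\<omega>. Y j \<omega> \<partial>PE) = 0" unfolding e
    apply (subst Bochner_Integration.integral_diff[OF i12 PE_const])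
    apply (subst Bochner_Integration.integral_add[OF i1 z2(1)])
    apply (simp only: c1)
    apply (simp only: integral_mult_right_zero z2(2) z1(2))
    done
qed

lemma Y_sq: assumes j: "j \<in> {1..p}"
  shows "integrable PE (\<lambda>\<omega>. (Y j \<omega>)^2)"
    "(\<integral>\<omega>. (Y j \<omega>)^2 \<partial>PE) \<le> 12 * a^2 * s2 * (b j)^2 + (9 * real n^3 * sd^4 * (\<Sum>k=1..n. (c k)^4) + 3 * s2^2)"
proof -
  note z2 = Zc_sq[OF sd j, where c=c and n=n] and z4 = Zc_4[OF sd j, where c=c and n=n]
  let ?R = "\<lambda>\<omega>. 12 * a^2 * (b j)^2 * (Zc n c j \<omega>)^2 + 3 * (Zc n c j \<omega>)^4 + 3 * s2^2"
  have le: "(Y j \<omega>)^2 \<le> ?R \<omega>" for \<omega>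
  proof -
    define z where "z = Zc n c j \<omega>"
    have "(2 * a * b j * z + z^2 - s2)^2 \<le> 3 * ((2 * a * b j * z)^2 + (z^2)^2 + s2^2)"
      by (rule sq3)
    then show ?thesis unfolding Yf_def z_def[symmetric]
      by (simp add: power_mult_distrib algebra_simps eval_nat_numeral)
  qed
  have iR: "integrable PE ?R" using z2 z4
    by (intro Bochner_Integration.integrable_add integrable_mult_right PE_const) auto
  show iY: "integrable PE (\<lambda>\<omega>. (Y j \<omega>)^2)"
  proof (rule Bochner_Integration.integrable_bound[OF iR])
    show "AE \<omega> in PE. norm ((Y j \<omega>)^2) \<le> norm (?R \<omega>)"
      using le by (intro AE_I2) simp
  qed simp
  have "(\<integral>\<omega>. (Y j \<omega>)^2 \<partial>PE) \<le> (\<integral>\<omega>. ?R \<omega> \<partial>PE)"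
    by (rule integral_mono[OF iY iR le])
  also have "\<dots> = 12 * a^2 * (b j)^2 * s2 + 3 * (\<integral>\<omega>. (Zc n c j \<omega>)^4 \<partial>PE) + 3 * s2^2"
  proof -
    have i1: "integrable PE (\<lambda>\<omega>. 12 * a^2 * (b j)^2 * (Zc n c j \<omega>)^2)"
      using z2(1) by (rule integrable_mult_right)
    have i2: "integrable PE (\<lambda>\<omega>. 3 * (Zc n c j \<omega>)^4)"
      using z4(1) by (rule integrable_mult_right)
    have i12: "integrable PE (\<lambda>\<omega>. 12 * a^2 * (b j)^2 * (Zc n c j \<omega>)^2 + 3 * (Zc n c j \<omega>)^4)"
      using i1 i2 by (rule Bochner_Integration.integrable_add)
    have c1: "(\<integral>\<omega>. s2^2 \<partial>PE) = s2^2" by (rule PE_iconst)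
    show ?thesis
      apply (subst Bochner_Integration.integral_add[OF i12 PE_const])
      apply (subst Bochner_Integration.integral_add[OF i1 i2])
      apply (simp only: integral_mult_right_zero c1 z2(2))
      done
  qed
  also have "\<dots> \<le> 12 * a^2 * (b j)^2 * s2 + 3 * (real n ^ 3 * (\<Sum>k = 1..n. c k ^ 4) * (3 * sd ^ 4)) + 3 * s2^2"
    by (intro add_mono order_refl mult_left_mono z4(2)) simp
  finally show "(\<integral>\<omega>. (Y j \<omega>)^2 \<partial>PE) \<le> 12 * a^2 * s2 * (b j)^2 + (9 * real n^3 * sd^4 * (\<Sum>k=1..n. (c k)^4) + 3 * s2^2)"
    by (simp add: algebra_simps)
qed

lemma Y_cross: assumes j: "j \<in> {1..p}" "j' \<in> {1..p}" "j \<noteq> j'" and n: "n \<ge> 1"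
  shows "integrable PE (\<lambda>\<omega>. Y j \<omega> * Y j' \<omega>)" "(\<integral>\<omega>. Y j \<omega> * Y j' \<omega> \<partial>PE) = 0"
proof -
  have "integrable PE (\<lambda>\<omega>. (Y j \<omega>)^2 + (Y j' \<omega>)^2)"
    using Y_sq(1)[OF j(1)] Y_sq(1)[OF j(2)] by auto
  then show "integrable PE (\<lambda>\<omega>. Y j \<omega> * Y j' \<omega>)"
  proof (rule Bochner_Integration.integrable_bound)
    show "AE \<omega> in PE. norm (Y j \<omega> * Y j' \<omega>) \<le> norm ((Y j \<omega>)^2 + (Y j' \<omega>)^2)"
      using sq2 by (intro AE_I2) simp
  qed simp
  have "(\<integral>\<omega>. Y j \<omega> * Y j' \<omega> \<partial>PE) = (\<integral>\<omega>. Y j \<omega> \<partial>PE) * (\<integral>\<omega>. Y j' \<omega> \<partial>PE)"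
    by (rule col_indep_integral[OF sd n j]) (simp_all only: Y_int j Yf_meas)
  then show "(\<integral>\<omega>. Y j \<omega> * Y j' \<omega> \<partial>PE) = 0" using Y_int j by simp
qed

end


context
  fixes sd :: real and n p :: nat and c b :: "nat \<Rightarrow> real" and a :: real
  assumes sd: "sd > 0" and n: "n \<ge> 1"
begin

abbreviation "PF \<equiv> PiM ({1..n}\<times>{1..p}) (\<lambda>_. NN sd)"
abbreviation "s2F \<equiv> sd^2 * (\<Sum>k=1..n. (c k)^2)"
abbreviation "YF j \<omega> \<equiv> Yf a b s2F j (Zc n c j \<omega>)"

lemma YY1: assumes "j \<in> {1..p}" "j' \<in> {1..p}"
  shows "integrable PF (\<lambda>\<omega>. YF j \<omega> * YF j' \<omega>)"
proof (cases "j = j'")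
  case True
  then show ?thesis
    using Y_sq(1)[OF sd assms(1), where n=n and c=c and b=b and a=a] by (simp add: power2_eq_square)
next
  case False
  then show ?thesis by (rule Y_cross(1)[OF sd assms _ n])
qed

lemma YY2: assumes "j \<in> {1..p}" "j' \<in> {1..p}"
  shows "(\<integral>\<omega>. YF j \<omega> * YF j' \<omega> \<partial>PF) = (if j = j' then (\<integral>\<omega>. (YF j \<omega>)^2 \<partial>PF) else 0)"
proof (cases "j = j'")
  case True
  then show ?thesis by (simp add: power2_eq_square)
next
  case False
  then show ?thesis using Y_cross(2)[OF sd assms False n] by simp
qed

lemma sumY:
  shows "integrable PF (\<lambda>\<omega>. (\<Sum>j\<in>{1..p}. YF j \<omega>)^2)"
    "(\<integral>\<omega>. (\<Sum>j\<in>{1..p}. YF j \<omega>)^2 \<partial>PF) \<le>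
       (\<Sum>j\<in>{1..p}. 12 * a^2 * s2F * (b j)^2 + (9 * real n^3 * sd^4 * (\<Sum>k=1..n. (c k)^4) + 3 * s2F^2))"
proof -
  have e: "(\<Sum>j\<in>{1..p}. YF j \<omega>)^2 = (\<Sum>j\<in>{1..p}. \<Sum>j'\<in>{1..p}. YF j \<omega> * YF j' \<omega>)" for \<omega>
    unfolding power2_eq_square sum_product ..
  show "integrable PF (\<lambda>\<omega>. (\<Sum>j\<in>{1..p}. YF j \<omega>)^2)"
    unfolding e by (intro Bochner_Integration.integrable_sum YY1)
  have "(\<integral>\<omega>. (\<Sum>j\<in>{1..p}. YF j \<omega>)^2 \<partial>PF) = (\<Sum>j\<in>{1..p}. \<integral>\<omega>. (\<Sum>j'\<in>{1..p}. YF j \<omega> * YF j' \<omega>) \<partial>PF)"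
    unfolding e by (rule Bochner_Integration.integral_sum) (intro Bochner_Integration.integrable_sum YY1)
  also have "\<dots> = (\<Sum>j\<in>{1..p}. \<integral>\<omega>. (YF j \<omega>)^2 \<partial>PF)"
  proof (rule sum.cong[OF refl])
    fix j assume j: "j \<in> {1..p}"
    have "(\<integral>\<omega>. (\<Sum>j'\<in>{1..p}. YF j \<omega> * YF j' \<omega>) \<partial>PF) = (\<Sum>j'\<in>{1..p}. \<integral>\<omega>. YF j \<omega> * YF j' \<omega> \<partial>PF)"
      by (rule Bochner_Integration.integral_sum) (rule YY1[OF j])
    also have "\<dots> = (\<Sum>j'\<in>{1..p}. (if j = j' then (\<integral>\<omega>. (YF j \<omega>)^2 \<partial>PF) else 0))"
      by (rule sum.cong[OF refl]) (rule YY2[OF j])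
    also have "\<dots> = (\<integral>\<omega>. (YF j \<omega>)^2 \<partial>PF)"
      using j by (simp add: sum.delta)
    finally show "(\<integral>\<omega>. (\<Sum>j'\<in>{1..p}. YF j \<omega> * YF j' \<omega>) \<partial>PF) = (\<integral>\<omega>. (YF j \<omega>)^2 \<partial>PF)" .
  qed
  also have "\<dots> \<le> (\<Sum>j\<in>{1..p}. 12 * a^2 * s2F * (b j)^2 + (9 * real n^3 * sd^4 * (\<Sum>k=1..n. (c k)^4) + 3 * s2F^2))"
    by (rule sum_mono) (rule Y_sq(2)[OF sd])
  finally show "(\<integral>\<omega>. (\<Sum>j\<in>{1..p}. YF j \<omega>)^2 \<partial>PF) \<le>
       (\<Sum>j\<in>{1..p}. 12 * a^2 * s2F * (b j)^2 + (9 * real n^3 * sd^4 * (\<Sum>k=1..n. (c k)^4) + 3 * s2F^2))" .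
qed

end


lemma cnt: "(\<Sum>k=1..n. (if m < k then 1 else 0::real)) = real (n - m)"
proof (induction n)
  case 0 then show ?case by simp
next
  case (Suc n)
  have "(\<Sum>k=1..Suc n. (if m < k then 1 else 0::real)) = (\<Sum>k=1..n. (if m < k then 1 else 0::real)) + (if m < Suc n then 1 else 0)"
    by (simp add: sum.cl_ivl_Suc)
  then show ?case using Suc by (auto simp: of_nat_diff Suc_diff_le)
qed

lemma Xbar_eq:
  assumes "j \<in> {1..n-1}"
  shows "Xbar n d k j = d j * ((if j < k then 1 else 0) - real (n - j) / real n)"
proof -
  have "(\<Sum>k'=1..n. Xmat d k' j) = d j * (\<Sum>k'=1..n. (if j < k' then 1 else 0::real))"
    unfolding Xmat_def sum_distrib_left by (intro sum.cong) auto
  also have "\<dots> = d j * real (n - j)" by (simp only: cnt)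
  finally show ?thesis unfolding Xbar_def Xmat_def by (simp add: algebra_simps)
qed

lemma gram:
  assumes i: "i \<in> {1..n-1}" and j: "j \<in> {1..n-1}"
  shows "(\<Sum>k=1..n. Xbar n d k i * Xbar n d k j) =
     d i * d j * (real n - real (max i j) - real (n - i) * real (n - j) / real n)"
proof -
  have n: "real n > 0" using i by auto
  define al where "al = real (n - i) / real n"
  define be where "be = real (n - j) / real n"
  let ?e = "\<lambda>m k. (if m < k then 1 else 0::real)"
  have "(\<Sum>k=1..n. Xbar n d k i * Xbar n d k j) =
        d i * d j * (\<Sum>k=1..n. ?e (max i j) k - be * ?e i k - al * ?e j k + al * be)"
    unfolding sum_distrib_left
    by (intro sum.cong refl) (simp add: Xbar_eq[OF i] Xbar_eq[OF j] al_def be_def algebra_simps)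
  also have "(\<Sum>k=1..n. ?e (max i j) k - be * ?e i k - al * ?e j k + al * be)
      = real (n - max i j) - be * real (n - i) - al * real (n - j) + real n * al * be"
    unfolding sum.distrib sum_subtractf sum_distrib_left[symmetric] cnt by simp
  also have "\<dots> = real n - real (max i j) - real (n - i) * real (n - j) / real n"
  proof -
    have "i \<le> n" "j \<le> n" using i j by auto
    then have e: "real (n - i) = real n - real i" "real (n - j) = real n - real j"
       "real (n - max i j) = real n - real (max i j)" by (auto simp: of_nat_diff)
    show ?thesis using n unfolding e al_def be_def by (simp add: field_simps)
  qed
  finally show ?thesis .
qed


definition "cc n d i = (\<lambda>k. Xbar n d k i)"
definition "aa n d u i = (\<Sum>k=1..n. Xbar n d k i * Xbar n d k u)"
definition "ss sd n d i = sd^2 * (\<Sum>k=1..n. (cc n d i k)^2)"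
definition "gg n d u sd b p i = (aa n d u i)^2 * ((\<Sum>j=1..p. (b j)^2) / real p) + ss sd n d i"
definition "Tq n d u b p W i = (\<Sum>j=1..p. (chat n d u b W i j)^2) / real p"

lemma chat_eq:
  assumes u: "u \<in> {1..n-1}"
  shows "chat n d u b W i j = aa n d u i * b j + Zc n (cc n d i) j W"
proof -
  have y: "Ybar n d u b W k j = Xbar n d k u * b j + W (k, j)" for k
  proof -
    have "(\<Sum>i'=1..n-1. Xbar n d k i' * beta_star u b i' j) = (\<Sum>i'=1..n-1. (if i' = u then Xbar n d k u * b j else 0))"
      unfolding beta_star_def by (intro sum.cong) auto
    also have "\<dots> = Xbar n d k u * b j" using u by (subst sum.delta) simp_all
    finally show ?thesis unfolding Ybar_def by simp
  qed
  show ?thesis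
    unfolding chat_def y aa_def Zc_def cc_def
    by (simp add: sum.distrib sum_distrib_left algebra_simps)
qed

lemma T_diff:
  assumes u: "u \<in> {1..n-1}" and p: "p \<ge> 1"
  shows "Tq n d u b p W i - gg n d u sd b p i =
     (\<Sum>j\<in>{1..p}. Yf (aa n d u i) b (ss sd n d i) j (Zc n (cc n d i) j W)) / real p"
proof -
  let ?a = "aa n d u i" and ?s = "ss sd n d i"
  have e: "(chat n d u b W i j)^2 = ?a^2 * (b j)^2 + Yf ?a b ?s j (Zc n (cc n d i) j W) + ?s" for j
    unfolding chat_eq[OF u] Yf_def by (simp add: power2_eq_square algebra_simps)
  have "(\<Sum>j=1..p. (chat n d u b W i j)^2) =
        ?a^2 * (\<Sum>j=1..p. (b j)^2) + (\<Sum>j\<in>{1..p}. Yf ?a b ?s j (Zc n (cc n d i) j W)) + real p * ?s"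
    unfolding e by (simp add: sum.distrib sum_distrib_left)
  then show ?thesis using p unfolding Tq_def gg_def by (simp add: field_simps)
qed

lemma L2bound:
  assumes sd: "sd > 0" and u: "u \<in> {1..n-1}" and p: "p \<ge> 1"
  defines "PP' \<equiv> PiM ({1..n}\<times>{1..p}) (\<lambda>_. NN sd)"
  shows "integrable PP' (\<lambda>W. (Tq n d u b p W i - gg n d u sd b p i)^2)"
    "(\<integral>W. (Tq n d u b p W i - gg n d u sd b p i)^2 \<partial>PP') \<le>
       12 * (aa n d u i)^2 * ss sd n d i * ((\<Sum>j=1..p. (b j)^2) / real p) * (1 / real p)
     + (9 * real n^3 * sd^4 * (\<Sum>k=1..n. (cc n d i k)^4) + 3 * (ss sd n d i)^2) * (1 / real p)"
proof -
  have n: "n \<ge> 1" using u by auto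
  let ?a = "aa n d u i" and ?s = "ss sd n d i" and ?c = "cc n d i"
  let ?S = "\<lambda>W. (\<Sum>j\<in>{1..p}. Yf ?a b ?s j (Zc n ?c j W))"
  have e: "(\<lambda>W. (Tq n d u b p W i - gg n d u sd b p i)^2) = (\<lambda>W. (?S W)^2 / (real p)^2)"
    unfolding T_diff[OF u p] by (simp add: power_divide)
  note sY = sumY[OF sd n, where p=p and c="?c" and b=b and a="?a"]
  have ss: "?s = sd^2 * (\<Sum>k=1..n. (?c k)^2)" unfolding ss_def ..
  show "integrable PP' (\<lambda>W. (Tq n d u b p W i - gg n d u sd b p i)^2)"
    unfolding e PP'_def using sY(1) ss by simp
  have "(\<integral>W. (Tq n d u b p W i - gg n d u sd b p i)^2 \<partial>PP') = (\<integral>W. (?S W)^2 \<partial>PP') / (real p)^2"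
    unfolding e by simp
  also have "\<dots> \<le> (\<Sum>j\<in>{1..p}. 12 * ?a^2 * ?s * (b j)^2 + (9 * real n^3 * sd^4 * (\<Sum>k=1..n. (?c k)^4) + 3 * ?s^2)) / (real p)^2"
    using sY(2) ss unfolding PP'_def by (intro divide_right_mono) simp_all
  also have "\<dots> = 12 * ?a^2 * ?s * ((\<Sum>j=1..p. (b j)^2) / real p) * (1 / real p)
     + (9 * real n^3 * sd^4 * (\<Sum>k=1..n. (?c k)^4) + 3 * ?s^2) * (1 / real p)"
  proof -
    have "(\<Sum>j\<in>{1..p}. 12 * ?a^2 * ?s * (b j)^2 + (9 * real n^3 * sd^4 * (\<Sum>k=1..n. (?c k)^4) + 3 * ?s^2))
       = 12 * ?a^2 * ?s * (\<Sum>j=1..p. (b j)^2) + real p * (9 * real n^3 * sd^4 * (\<Sum>k=1..n. (?c k)^4) + 3 * ?s^2)"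
      by (simp only: sum.distrib sum_distrib_left[symmetric]) (simp add: algebra_simps)
    then show ?thesis using p by (simp add: power2_eq_square field_simps)
  qed
  finally show "(\<integral>W. (Tq n d u b p W i - gg n d u sd b p i)^2 \<partial>PP') \<le>
       12 * ?a^2 * ?s * ((\<Sum>j=1..p. (b j)^2) / real p) * (1 / real p)
     + (9 * real n^3 * sd^4 * (\<Sum>k=1..n. (?c k)^4) + 3 * ?s^2) * (1 / real p)" .
qed

lemma Gid:
  assumes i: "i \<in> {1..n-1}" and u: "u \<in> {1..n-1}"
  shows "Gfun n d u sd bb2 i = (aa n d u i)^2 * bb2 + ss sd n d i"
proof -
  have g1: "(\<Sum>k=1..n. (cc n d i k)^2) = d i * d i * (real n - real i - real (n - i) * real (n - i) / real n)"
    using gram[OF i i, of d] unfolding cc_def by (simp add: power2_eq_square)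
  have g2: "aa n d u i = d i * d u * (real n - real (max i u) - real (n - i) * real (n - u) / real n)"
    using gram[OF i u, of d] unfolding aa_def .
  have n: "real n > 0" using i by auto
  have "i \<le> n" "u \<le> n" using i u by auto
  then have e: "real (n - i) = real n - real i" "real (n - u) = real n - real u"
    by (auto simp: of_nat_diff)
  show ?thesis
  proof (cases "i \<le> u")
    case True
    then have m: "real (max i u) = real u" by simp
    show ?thesis unfolding Gfun_def ss_def g1 g2 m e using True n
      by (simp add: field_simps power2_eq_square)
  next
    case False
    then have m: "real (max i u) = real i" by simp
    show ?thesis unfolding Gfun_def ss_def g1 g2 m e using False n
      by (simp add: field_simps power2_eq_square)
  qed
qed


lemma key_arith:
  fixes T g G :: "nat \<Rightarrow> real"
  assumes "m0 \<in> A" "\<forall>a\<in>A. G a = G m0" "\<forall>i\<in>S-A. \<delta> \<le> G m0 - G i"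
    "\<forall>i\<in>S. \<bar>g i - G i\<bar> < \<delta>/4" "\<forall>i\<in>S. \<bar>T i - g i\<bar> < \<delta>/4" "A \<subseteq> S"
    "m \<in> S" "\<forall>i\<in>S. T i \<le> T m"
  shows "m \<in> A"
proof (rule ccontr)
  assume "m \<notin> A"
  then have mSA: "m \<in> S - A" using assms(7) by blast
  have 1: "\<delta> \<le> G m0 - G m" using assms(3) mSA by blast
  have m0S: "m0 \<in> S" using assms(1,6) by blast
  have 2: "T m0 \<le> T m" using assms(8) m0S by blast
  have 3: "\<bar>g m0 - G m0\<bar> < \<delta>/4" "\<bar>T m0 - g m0\<bar> < \<delta>/4" using assms(4,5) m0S by blast+
  have 4: "\<bar>g m - G m\<bar> < \<delta>/4" "\<bar>T m - g m\<bar> < \<delta>/4" using assms(4,5,7) by blast+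
  show False using 1 2 3 4 by linarith
qed

lemma sq_lt_abs: "x^2 < y^2 \<Longrightarrow> 0 \<le> (y::real) \<Longrightarrow> \<bar>x\<bar> < y"
  using power2_less_imp_less[of "\<bar>x\<bar>" y] by simp

lemma L2conv:
  assumes sd: "sd > 0" and u: "u \<in> {1..n-1}"
    and B: "(\<lambda>p. (\<Sum>j=1..p. (b j)\<^sup>2) / real p) \<longlonglongrightarrow> bb2"
  shows "(\<lambda>p. \<integral>W. (Tq n d u b p W i - gg n d u sd b p i)^2 \<partial>PiM ({1..n}\<times>{1..p}) (\<lambda>_. NN sd)) \<longlonglongrightarrow> 0"
proof (rule tendsto_sandwich[where f="\<lambda>_. 0"])
  let ?K1 = "12 * (aa n d u i)^2 * ss sd n d i"
  let ?K2 = "9 * real n^3 * sd^4 * (\<Sum>k=1..n. (cc n d i k)^4) + 3 * (ss sd n d i)^2"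
  show "\<forall>\<^sub>F p in sequentially. 0 \<le> (\<integral>W. (Tq n d u b p W i - gg n d u sd b p i)^2 \<partial>PiM ({1..n}\<times>{1..p}) (\<lambda>_. NN sd))"
    by (intro always_eventually allI Bochner_Integration.integral_nonneg) simp
  show "\<forall>\<^sub>F p in sequentially. (\<integral>W. (Tq n d u b p W i - gg n d u sd b p i)^2 \<partial>PiM ({1..n}\<times>{1..p}) (\<lambda>_. NN sd))
      \<le> ?K1 * ((\<Sum>j=1..p. (b j)^2) / real p) * (1 / real p) + ?K2 * (1 / real p)"
    using eventually_ge_at_top[of 1]
    by eventually_elim (rule L2bound(2)[OF sd u])
  show "(\<lambda>_. 0::real) \<longlonglongrightarrow> 0" by simp
  have "(\<lambda>p. ?K1 * ((\<Sum>j=1..p. (b j)^2) / real p) * (1 / real p) + ?K2 * (1 / real p)) \<longlonglongrightarrow> ?K1 * bb2 * 0 + ?K2 * 0"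
    by (intro tendsto_intros B)
  then show "(\<lambda>p. ?K1 * ((\<Sum>j=1..p. (b j)^2) / real p) * (1 / real p) + ?K2 * (1 / real p)) \<longlonglongrightarrow> 0"
    by simp
qed

lemma gg_lim:
  assumes i: "i \<in> {1..n-1}" and u: "u \<in> {1..n-1}"
    and B: "(\<lambda>p. (\<Sum>j=1..p. (b j)\<^sup>2) / real p) \<longlonglongrightarrow> bb2"
  shows "(\<lambda>p. gg n d u sd b p i) \<longlonglongrightarrow> Gfun n d u sd bb2 i"
  unfolding gg_def Gid[OF i u] by (intro tendsto_intros B)


lemma norm_to_Tq:
  assumes "chat_row_norm n d u b p W i' \<le> chat_row_norm n d u b p W m"
  shows "Tq n d u b p W i' \<le> Tq n d u b p W m"
  using assms unfolding chat_row_norm_def Tq_def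
  by (intro divide_right_mono) (simp_all add: sum_nonneg)

lemma E_bound:
  fixes f :: "nat \<Rightarrow> real"
  assumes "finite S" "i \<in> S" "(\<Sum>i\<in>S. (f i)^2) < e^2" "0 \<le> e"
  shows "\<bar>f i\<bar> < e"
proof -
  have "(f i)^2 \<le> (\<Sum>i\<in>S. (f i)^2)"
    by (rule member_le_sum) (use assms in auto)
  then show ?thesis using assms(3,4) by (intro sq_lt_abs) auto
qed

theorem lemma1:
  fixes n u :: nat and d b :: "nat \<Rightarrow> real" and bb2 sd :: real
    and uhat :: "nat \<Rightarrow> (nat \<times> nat \<Rightarrow> real) \<Rightarrow> nat"
  assumes "n \<ge> 2" and "u \<in> {1..n-1}" and "real u \<ge> real n / 2"
    and "\<forall>i\<in>{1..n-1}. d i > 0"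
    and "(\<lambda>p. (\<Sum>j=1..p. (b j)\<^sup>2) / real p) \<longlonglongrightarrow> bb2"
    and "sd > 0"
    and "\<forall>p\<ge>1. \<forall>W\<in>space (noise_space sd n p).
           uhat p W \<in> argmax_set {1..n-1} (chat_row_norm n d u b p W)"
    and "\<forall>p\<ge>1. uhat p \<in> measurable (noise_space sd n p) (count_space UNIV)"
  shows "(\<lambda>p. measure (noise_space sd n p)
            {W \<in> space (noise_space sd n p).
               uhat p W \<in> argmax_set {1..n-1} (Gfun n d u sd bb2)}) \<longlonglongrightarrow> 1"
proof -
  note u = assms(2) and B = assms(5) and sd = assms(6)
  let ?I0 = "{1..n-1}"
  let ?P = "\<lambda>p. noise_space sd n p"
  have Peq: "\<And>p. noise_space sd n p = PiM ({1..n}\<times>{1..p}) (\<lambda>_. NN sd)"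
    unfolding noise_space_def NN_def ..
  have probP: "\<And>p. prob_space (?P p)" unfolding Peq by (rule prob_PP[OF sd])
  define G where "G = Gfun n d u sd bb2"
  define A where "A = argmax_set ?I0 G"
  have fin: "finite ?I0" by simp
  have ne: "?I0 \<noteq> {}" using u by auto
  have "Max (G ` ?I0) \<in> G ` ?I0" using fin ne by (intro Max_in) auto
  then obtain m0 where m0I: "m0 \<in> ?I0" and m0eq: "G m0 = Max (G ` ?I0)" by auto
  have m0max: "\<And>i. i \<in> ?I0 \<Longrightarrow> G i \<le> G m0"
    unfolding m0eq using fin by (intro Max_ge) auto
  have m0A: "m0 \<in> A" unfolding A_def argmax_set_def using m0I m0max by auto
  have AI: "A \<subseteq> ?I0" unfolding A_def argmax_set_def by auto
  have GA: "\<forall>a\<in>A. G a = G m0"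
  proof
    fix a assume "a \<in> A"
    then have "a \<in> ?I0" "G m0 \<le> G a" using m0I unfolding A_def argmax_set_def by auto
    then show "G a = G m0" using m0max by (intro antisym) auto
  qed
  have uhatA: "\<And>p W. p \<ge> 1 \<Longrightarrow> W \<in> space (?P p) \<Longrightarrow> uhat p W \<in> ?I0 \<and>
       (\<forall>i'\<in>?I0. Tq n d u b p W i' \<le> Tq n d u b p W (uhat p W))"
  proof -
    fix p W assume "p \<ge> 1" "W \<in> space (?P p)"
    then have "uhat p W \<in> argmax_set ?I0 (chat_row_norm n d u b p W)" using assms(7) by blast
    then show "uhat p W \<in> ?I0 \<and> (\<forall>i'\<in>?I0. Tq n d u b p W i' \<le> Tq n d u b p W (uhat p W))"
      unfolding argmax_set_def using norm_to_Tq by blast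
  qed
  have meas_good: "\<And>p. p \<ge> 1 \<Longrightarrow> {W \<in> space (?P p). uhat p W \<in> A} \<in> sets (?P p)"
  proof -
    fix p :: nat assume "p \<ge> 1"
    then have m: "uhat p \<in> measurable (?P p) (count_space UNIV)" using assms(8) by blast
    have "uhat p -` A \<inter> space (?P p) \<in> sets (?P p)"
      by (rule measurable_sets[OF m]) simp
    moreover have "uhat p -` A \<inter> space (?P p) = {W \<in> space (?P p). uhat p W \<in> A}" by auto
    ultimately show "{W \<in> space (?P p). uhat p W \<in> A} \<in> sets (?P p)" by simp
  qed
  show ?thesis
  proof (cases "?I0 \<subseteq> A")
    case True
    have "\<forall>\<^sub>F p in sequentially. measure (?P p) {W \<in> space (?P p). uhat p W \<in> A} = 1"
      using eventually_ge_at_top[of 1]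
    proof eventually_elim
      case (elim p)
      have "{W \<in> space (?P p). uhat p W \<in> A} = space (?P p)"
        using uhatA[OF elim] True by blast
      then show ?case using prob_space.prob_space[OF probP] by simp
    qed
    then show ?thesis unfolding G_def[symmetric] A_def[symmetric] by (rule tendsto_eventually)
  next
    case False
    define D where "D = (\<lambda>i. G m0 - G i) ` (?I0 - A)"
    have Dfin: "finite D" unfolding D_def by simp
    have Dne: "D \<noteq> {}" unfolding D_def using False by auto
    have Gless: "\<And>i. i \<in> ?I0 - A \<Longrightarrow> G i < G m0"
    proof -
      fix i assume i: "i \<in> ?I0 - A"
      then obtain i' where "i' \<in> ?I0" "G i < G i'" unfolding A_def argmax_set_def by force
      then show "G i < G m0" using m0max[of i'] by linarith
    qed
    define \<delta> where "\<delta> = Min D"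
    have \<delta>pos: "\<delta> > 0"
    proof -
      have "\<delta> \<in> D" unfolding \<delta>_def using Dfin Dne by (rule Min_in)
      then show ?thesis unfolding D_def using Gless by auto
    qed
    have \<delta>le: "\<forall>i\<in>?I0 - A. \<delta> \<le> G m0 - G i"
      unfolding \<delta>_def D_def using Dfin D_def by (auto intro: Min_le)
    define E where "E p W = (\<Sum>i\<in>?I0. (Tq n d u b p W i - gg n d u sd b p i)^2)" for p W
    have Eint: "\<And>p. p \<ge> 1 \<Longrightarrow> integrable (?P p) (E p)"
      unfolding E_def Peq
      by (intro Bochner_Integration.integrable_sum L2bound(1)[OF sd u])
    have Elim: "(\<lambda>p. \<integral>W. E p W \<partial>?P p) \<longlonglongrightarrow> 0"
    proof -
      have "(\<lambda>p. \<Sum>i\<in>?I0. \<integral>W. (Tq n d u b p W i - gg n d u sd b p i)^2 \<partial>?P p) \<longlonglongrightarrow> 0"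
        unfolding Peq by (intro tendsto_null_sum L2conv[OF sd u B])
      moreover have "\<forall>\<^sub>F p in sequentially. (\<Sum>i\<in>?I0. \<integral>W. (Tq n d u b p W i - gg n d u sd b p i)^2 \<partial>?P p) = (\<integral>W. E p W \<partial>?P p)"
        using eventually_ge_at_top[of 1]
      proof eventually_elim
        case (elim p)
        show ?case unfolding E_def
          by (rule Bochner_Integration.integral_sum[symmetric]) (unfold Peq, rule L2bound(1)[OF sd u elim])
      qed
      ultimately show ?thesis by (rule Lim_transform_eventually)
    qed
    have ev1: "\<forall>\<^sub>F p in sequentially. \<forall>i\<in>?I0. \<bar>gg n d u sd b p i - G i\<bar> < \<delta>/4"
    proof (rule eventually_ball_finite[OF fin], rule ballI)
      fix i assume i: "i \<in> ?I0"
      have "(\<lambda>p. gg n d u sd b p i) \<longlonglongrightarrow> G i" unfolding G_def by (rule gg_lim[OF i u B])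
      from tendstoD[OF this, of "\<delta>/4"] \<delta>pos
      show "\<forall>\<^sub>F p in sequentially. \<bar>gg n d u sd b p i - G i\<bar> < \<delta>/4" by (simp add: dist_real_def)
    qed
    have lower: "\<forall>\<^sub>F p in sequentially. 1 - (\<integral>W. E p W \<partial>?P p) / (\<delta>/4)^2 \<le> measure (?P p) {W \<in> space (?P p). uhat p W \<in> A}"
      using ev1 eventually_ge_at_top[of 1]
    proof eventually_elim
      case (elim p)
      interpret P: prob_space "?P p" by (rule probP)
      let ?good = "{W \<in> space (?P p). uhat p W \<in> A}"
      let ?bad = "{W \<in> space (?P p). (\<delta>/4)^2 \<le> E p W}"
      have gs: "?good \<in> sets (?P p)" using meas_good elim by blast
      have Em: "E p \<in> borel_measurable (?P p)" using Eint[OF elim(2)] by (rule borel_measurable_integrable)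
      have bs: "?bad \<in> sets (?P p)" using Em by measurable
      have sub: "space (?P p) - ?good \<subseteq> ?bad"
      proof
        fix W assume W: "W \<in> space (?P p) - ?good"
        show "W \<in> ?bad"
        proof (rule ccontr)
          assume "W \<notin> ?bad"
          then have lt: "E p W < (\<delta>/4)^2" using W by auto
          have c1: "\<forall>i\<in>?I0. \<bar>Tq n d u b p W i - gg n d u sd b p i\<bar> < \<delta>/4"
            using lt \<delta>pos unfolding E_def by (intro ballI E_bound[OF fin]) auto
          have "uhat p W \<in> A"
            using uhatA[OF elim(2), of W] W
            by (intro key_arith[OF m0A GA \<delta>le elim(1) c1 AI]) auto
          then show False using W by auto
        qed
      qed
      have "P.prob (space (?P p) - ?good) \<le> P.prob ?bad"
        by (rule P.finite_measure_mono[OF sub bs])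
      also have "\<dots> \<le> (\<integral>W. E p W \<partial>?P p) / (\<delta>/4)^2"
        by (rule integral_Markov_inequality_measure[OF Eint[OF elim(2)] sets.top])
           (use \<delta>pos in \<open>auto intro!: AE_I2 sum_nonneg simp: E_def\<close>)
      finally have "1 - P.prob ?good \<le> (\<integral>W. E p W \<partial>?P p) / (\<delta>/4)^2"
        using P.prob_compl[OF gs] by simp
      then show ?case by simp
    qed
    have upper: "\<forall>\<^sub>F p in sequentially. measure (?P p) {W \<in> space (?P p). uhat p W \<in> A} \<le> 1"
      by (intro always_eventually allI prob_space.prob_le_1[OF probP])
    have "(\<lambda>p. 1 - (\<integral>W. E p W \<partial>?P p) / (\<delta>/4)^2) \<longlonglongrightarrow> 1 - 0 / (\<delta>/4)^2"
      using \<delta>pos by (intro tendsto_intros Elim) simp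
    then have l1: "(\<lambda>p. 1 - (\<integral>W. E p W \<partial>?P p) / (\<delta>/4)^2) \<longlonglongrightarrow> 1" by simp
    have "(\<lambda>p. measure (?P p) {W \<in> space (?P p). uhat p W \<in> A}) \<longlonglongrightarrow> 1"
      by (rule tendsto_sandwich[OF lower upper l1 tendsto_const])
    then show ?thesis unfolding A_def G_def .
  qed
qed


end
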